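(* Let $n\ge 1$, let $\mu\in\mathbb{R}^n\setminus\{0\}$ and $\alpha\in\,]0,1/2[$. Let $\mathcal{D}=\mathbb{R}^n\setminus\{0,-\mu\}$ and define $\phi:\mathcal{D}\to\mathbb{R}^+$ by $$\phi(x)=Y(x)^\top Y(x),\qquad Y(x)=\|x\|^{-2\alpha}x-\|x+\mu\|^{-2\alpha}(x+\mu).$$ Then the global maximum of $\phi$ on $\mathcal{D}$ is attained at $x=-\mu/2$.
   Context: $\|\cdot\|$ denotes the Euclidean norm on $\mathbb{R}^n$. *)

theory Defs
  imports "HOL-Analysis.Analysis"
begin

definition Yfun :: "real \<Rightarrow> real ^ 'n \<Rightarrow> real ^ 'n \<Rightarrow> real ^ 'n" where
  "Yfun \<alpha> \<mu> x = (norm x powr (-2 * \<alpha>)) *\<^sub>R x - (norm (x + \<mu>) powr (-2 * \<alpha>)) *\<^sub>R (x + \<mu>)"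

definition phi :: "real \<Rightarrow> real ^ 'n \<Rightarrow> real ^ 'n \<Rightarrow> real" where
  "phi \<alpha> \<mu> x = Yfun \<alpha> \<mu> x \<bullet> Yfun \<alpha> \<mu> x"

definition domD :: "real ^ 'n \<Rightarrow> (real ^ 'n) set" where
  "domD \<mu> = UNIV - {0, -\<mu>}"

end

theory Submission imports Defs begin
lemma step3:
  fixes p r s :: real
  assumes p: "0 < p" "p < 1" and r: "r > 0" and s: "s > 0"
  shows "r powr (1-p) + s powr (1-p) \<le> 2 powr p * (r+s) powr (1-p)"
proof -
  define M where "M = r + s"
  have M: "M > 0" using r s M_def by simp
  define t where "t = r / M"
  define u where "u = s / M"
  have t: "t > 0" and u: "u > 0" using r s M t_def u_def by auto
  have tu: "t + u = 1" using M unfolding t_def u_def add_divide_distrib[symmetric] M_def by simp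
  have Y1: "t powr (1-p) * (1/2) powr p \<le> (1-p)*t + p*(1/2)"
    using Youngs_inequality_0[of "1-p" p t "1/2"] p t by simp
  have Y2: "u powr (1-p) * (1/2) powr p \<le> (1-p)*u + p*(1/2)"
    using Youngs_inequality_0[of "1-p" p u "1/2"] p u by simp
  have "(t powr (1-p) + u powr (1-p)) * (1/2) powr p \<le> (1-p)*(t+u) + p"
    using add_mono[OF Y1 Y2] by (simp add: algebra_simps)
  hence "(t powr (1-p) + u powr (1-p)) * (1/2) powr p \<le> 1" using tu by simp
  moreover have "(1/2::real) powr p = 1 / 2 powr p" by (simp add: powr_divide)
  ultimately have S: "t powr (1-p) + u powr (1-p) \<le> 2 powr p"
    by (simp add: divide_simps)
  have "r = t * M" "s = u * M" using M by (auto simp: t_def u_def)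
  hence "r powr (1-p) + s powr (1-p) = (t powr (1-p) + u powr (1-p)) * M powr (1-p)"
    using t u M by (simp add: powr_mult distrib_right)
  also have "\<dots> \<le> 2 powr p * M powr (1-p)"
    using S by (simp add: mult_right_mono)
  finally show ?thesis by (simp add: M_def)
qed
lemma gen_pow: 
  fixes a b p :: real assumes "a > 0" "b > 0"
  shows "(a^2) powr (1 - p/2) * (b^2) powr (p/2) = a^2 * (a powr -p) / (b powr -p)"
proof -
  have a2: "a^2 = a powr 2" using assms by simp
  have b2: "b^2 = b powr 2" using assms by simp
  have "(a^2) powr (1 - p/2) = a powr (2 * (1 - p/2))"
    by (subst a2) (rule powr_powr)
  also have "2 * (1 - p/2) = 2 + (-p)" by simp
  also have "a powr (2 + (-p)) = a powr 2 * a powr -p"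
    by (rule powr_add)
  also have "a powr 2 = a^2" using a2 by simp
  finally have 1: "(a^2) powr (1 - p/2) = a^2 * a powr -p" .
  have "(b^2) powr (p/2) = b powr (2 * (p/2))"
    by (subst b2) (rule powr_powr)
  also have "2 * (p/2) = p" by simp
  also have "b powr p = 1 / b powr -p" using assms by (simp add: powr_minus divide_inverse)
  finally show ?thesis using 1 by simp
qed
lemma t1: fixes p r s :: real
  assumes p: "0 < p" "p < 1" and r: "r > 0" and s: "s > 0"
  shows "r^2 * (r powr -p) / (s powr -p) \<le> (1 - p/2) * r^2 + (p/2) * s^2"
proof -
  have "(r^2) powr (1 - p/2) * (s^2) powr (p/2) \<le> (1 - p/2) * r^2 + (p/2) * s^2"
    by (rule Youngs_inequality_0) (use p r s in auto)
  thus ?thesis unfolding gen_pow[OF r s, of p] .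
qed
lemma t2: fixes k l r s p :: real assumes k: "k > 0" and l: "l > 0"
  and h: "r^2 * k / l + s^2 * l / k \<le> (1 - p/2) * r^2 + (p/2) * s^2 + ((1 - p/2) * s^2 + (p/2) * r^2)"
  shows "k^2 * r^2 + l^2 * s^2 \<le> k * l * (r^2 + s^2)"
proof -
  have e0: "(1 - p/2) * r^2 + (p/2) * s^2 + ((1 - p/2) * s^2 + (p/2) * r^2) = r^2 + s^2"
    by (simp add: algebra_simps)
  have 3: "r^2 * k / l + s^2 * l / k \<le> r^2 + s^2" using h e0 by linarith
  have 4: "(r^2 * k / l + s^2 * l / k) * (k*l) \<le> (r^2 + s^2) * (k * l)"
    using k l 3 by (intro mult_right_mono) auto
  have e1: "r^2 * k / l * (k*l) = k^2 * r^2" using l by (simp add: power2_eq_square)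
  have e2: "s^2 * l / k * (k*l) = l^2 * s^2" using k by (simp add: power2_eq_square)
  have e3: "(r^2 * k / l + s^2 * l / k) * (k*l) = k^2 * r^2 + l^2 * s^2"
    unfolding distrib_right e1 e2 ..
  have e4: "(r^2 + s^2) * (k * l) = k * l * (r^2 + s^2)" by (rule mult.commute)
  show ?thesis using 4 unfolding e3 e4 .
qed
lemma step1:
  fixes p r s :: real
  assumes p: "0 < p" "p < 1" and r: "r > 0" and s: "s > 0"
  shows "(r powr -p)^2 * r^2 + (s powr -p)^2 * s^2 \<le> (r powr -p) * (s powr -p) * (r^2 + s^2)"
  using r s by (intro t2[OF _ _ add_mono[OF t1[OF p r s] t1[OF p s r]]]) auto

lemma key:
  fixes p r s m :: real
  assumes p: "0 < p" "p < 1" and r: "r > 0" and s: "s > 0" and m: "m > 0" "m \<le> r + s"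
  and st1: "(r powr -p)^2 * r^2 + (s powr -p)^2 * s^2 \<le> (r powr -p) * (s powr -p) * (r^2 + s^2)"
  and st3: "r powr (1-p) + s powr (1-p) \<le> 2 powr p * (r+s) powr (1-p)"
  shows "(r powr -p)^2 * r^2 + (s powr -p)^2 * s^2 - r powr -p * s powr -p * (r^2+s^2-m^2)
     \<le> ((m/2) powr -p)^2 * m^2"
proof -
  obtain k l where kd: "k = r powr -p" and ld: "l = s powr -p" by blast
  obtain M where Md: "M = r + s" by blast
  have k: "k > 0" and l: "l > 0" using r s by (auto simp: kd ld)
  have M: "M > 0" using r s Md by simp
  define A where "A = k^2 * r^2 + l^2 * s^2 - k * l * (r^2 + s^2)"
  have A: "A \<le> 0" using st1 unfolding A_def kd ld by simp
  have kr: "k * r = r powr (1-p)" unfolding kd using r by (simp add: powr_diff powr_minus field_simps)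
  have ls: "l * s = s powr (1-p)" unfolding ld using s by (simp add: powr_diff powr_minus field_simps)
  have S: "k * r + l * s \<le> 2 powr p * M powr (1-p)" using st3 kr ls Md by simp
  have sq: "(k * r + l * s)^2 = A + k * l * M^2" unfolding A_def Md by (simp add: power2_eq_square algebra_simps)
  have S2: "A + k * l * M^2 \<le> (2 powr p * M powr (1-p))^2"
    unfolding sq[symmetric] using S k l r s by (intro power_mono) auto
  define lam where "lam = m / M"
  have lam: "0 < lam" "lam \<le> 1" using m M Md by (auto simp: lam_def)
  define L where "L = lam powr (1-p)"
  have L: "0 < L" "L \<le> 1" using lam p unfolding L_def by (auto simp: powr_le1)
  have lamL: "lam \<le> L" unfolding L_def using lam p powr_mono'[of "1-p" 1 lam] by simp
  have mM: "m = lam * M" using M by (simp add: lam_def)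
  have "A + k * l * m^2 = A + k * l * M^2 * lam^2" unfolding mM by (simp add: power2_eq_square)
  also have "\<dots> \<le> A * L^2 + k * l * M^2 * L^2"
  proof (rule add_mono)
    show "A \<le> A * L^2" using A L by (simp add: mult_le_cancel_left1 power_le_one)
    show "k * l * M^2 * lam^2 \<le> k * l * M^2 * L^2"
      using lamL lam k l M by (intro mult_left_mono power_mono) auto
  qed
  also have "\<dots> = (A + k * l * M^2) * L^2" by (simp add: algebra_simps)
  also have "\<dots> \<le> (2 powr p * M powr (1-p))^2 * L^2" using S2 by (simp add: mult_right_mono)
  also have "\<dots> = (2 powr p * m powr (1-p))^2"
    unfolding mM L_def using lam M by (simp add: powr_mult power_mult_distrib)
  also have "2 powr p * m powr (1-p) = (m/2) powr -p * m"
    using m by (simp add: powr_divide powr_minus powr_add powr_diff divide_simps)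
  finally have "A + k * l * m^2 \<le> ((m/2) powr -p * m)^2" .
  thus ?thesis unfolding A_def kd[symmetric] ld[symmetric] by (simp add: algebra_simps power_mult_distrib)
qed

theorem lemma5:
  fixes \<mu> :: "real ^ 'n" and \<alpha> :: real
  assumes "\<mu> \<noteq> 0" and "0 < \<alpha>" and "\<alpha> < 1/2"
  shows "- (1/2) *\<^sub>R \<mu> \<in> domD \<mu> \<and>
         (\<forall>x \<in> domD \<mu>. phi \<alpha> \<mu> x \<le> phi \<alpha> \<mu> (- (1/2) *\<^sub>R \<mu>))"
proof -
  define p where "p = 2 * \<alpha>"
  have p: "0 < p" "p < 1" using assms by (auto simp: p_def)
  have e: "-2 * \<alpha> = -p" by (simp add: p_def)
  define m where "m = norm \<mu>"
  have m: "m > 0" using assms(1) by (simp add: m_def)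
  have mem: "- (1/2) *\<^sub>R \<mu> \<in> domD \<mu>"
  proof -
    have "- (1/2) *\<^sub>R \<mu> \<noteq> 0" using assms(1) by simp
    moreover have "- (1/2) *\<^sub>R \<mu> \<noteq> - \<mu>"
    proof
      assume "- (1/2) *\<^sub>R \<mu> = - \<mu>"
      hence "norm (- (1/2) *\<^sub>R \<mu>) = norm (- \<mu>)" by simp
      hence "m / 2 = m" by (simp add: m_def)
      thus False using m by simp
    qed
    ultimately show ?thesis by (simp add: domD_def)
  qed
  have Yc: "Yfun \<alpha> \<mu> (- (1/2) *\<^sub>R \<mu>) = - ((m/2) powr -p) *\<^sub>R \<mu>"
  proof -
    have n1: "norm (- (1/2) *\<^sub>R \<mu>) = m/2" by (simp add: m_def)
    have x2: "- (1/2) *\<^sub>R \<mu> + \<mu> = (1/2) *\<^sub>R \<mu>"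
    proof -
      have "- (1/2) *\<^sub>R \<mu> + \<mu> = - (1/2) *\<^sub>R \<mu> + 1 *\<^sub>R \<mu>" by simp
      also have "\<dots> = (- (1/2) + 1) *\<^sub>R \<mu>" by (rule scaleR_add_left[symmetric])
      also have "(- (1/2) + 1 :: real) = 1/2" by simp
      finally show ?thesis .
    qed
    have n2: "norm ((1/2::real) *\<^sub>R \<mu>) = m/2" by (simp add: m_def)
    obtain c where cd: "c = (m/2) powr -p" by blast
    have "c *\<^sub>R (- (1/2) *\<^sub>R \<mu>) - c *\<^sub>R ((1/2) *\<^sub>R \<mu>) = (c * (- (1/2)) - c * (1/2)) *\<^sub>R \<mu>"
      by (simp only: scaleR_scaleR scaleR_left_diff_distrib)
    also have "c * (- (1/2)) - c * (1/2) = - c" by simp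
    finally show ?thesis unfolding Yfun_def e x2 n1 n2 cd[symmetric] .
  qed
  have phic: "phi \<alpha> \<mu> (- (1/2) *\<^sub>R \<mu>) = ((m/2) powr -p)^2 * m^2"
    unfolding phi_def Yc by (simp add: m_def power2_eq_square inner_commute dot_square_norm)
  have "phi \<alpha> \<mu> x \<le> phi \<alpha> \<mu> (- (1/2) *\<^sub>R \<mu>)" if x: "x \<in> domD \<mu>" for x
  proof -
    define b where "b = x + \<mu>"
    have x0: "x \<noteq> 0" and b0: "b \<noteq> 0" using x by (auto simp: domD_def b_def add_eq_0_iff2)
    define r where "r = norm x"
    define s where "s = norm b"
    have r: "r > 0" and s: "s > 0" using x0 b0 by (auto simp: r_def s_def)
    have mb: "\<mu> = b - x" by (simp add: b_def)
    have mle: "m \<le> r + s" unfolding m_def r_def s_def mb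
      using norm_triangle_ineq4[of b x] by simp
    have m2: "m^2 = s^2 + r^2 - 2 * (x \<bullet> b)"
      unfolding m_def r_def s_def mb by (simp add: power2_norm_eq_inner inner_diff algebra_simps inner_commute)
    obtain k l where kd: "k = r powr -p" and ld: "l = s powr -p" by blast
    obtain c where cd: "c = x \<bullet> b" by blast
    have Y: "Yfun \<alpha> \<mu> x = k *\<^sub>R x - l *\<^sub>R b"
      unfolding Yfun_def e kd ld r_def s_def b_def by simp
    have xx: "x \<bullet> x = r^2" unfolding r_def by (simp add: power2_norm_eq_inner)
    have bb: "b \<bullet> b = s^2" unfolding s_def by (simp add: power2_norm_eq_inner)
    have bx: "b \<bullet> x = c" unfolding cd by (simp add: inner_commute)
    have "phi \<alpha> \<mu> x = k*k*(x \<bullet> x) - k*l*(x \<bullet> b) - l*k*(b \<bullet> x) + l*l*(b \<bullet> b)"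
      unfolding phi_def Y by (simp add: inner_diff_left inner_diff_right algebra_simps)
    also have "\<dots> = k * k * r\<^sup>2 - 2 * k * l * c + l * l * s\<^sup>2" unfolding xx bb bx cd[symmetric] by simp
    also have "\<dots> = k^2 * r^2 + l^2 * s^2 - k * l * (r^2+s^2-m^2)"
      unfolding m2 cd[symmetric] by (simp add: power2_eq_square algebra_simps)
    finally have ph: "phi \<alpha> \<mu> x = (r powr -p)^2 * r^2 + (s powr -p)^2 * s^2 - r powr -p * s powr -p * (r^2+s^2-m^2)"
      unfolding kd ld .
    show ?thesis unfolding ph phic
      by (rule key[OF p r s m mle step1[OF p r s] step3[OF p r s]])
  qed
  with mem show ?thesis by blast
qed

end
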